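(* Let $(Q,\cdot)$ be a quasigroup satisfying $(xx)(yz)=(x(xy))z$ for all $x,y,z\in Q$ (an LC1-quasigroup). Then $Q$ satisfies $x(x(yz))=((xx)y)z$ for all $x,y,z\in Q$ (i.e. $Q$ is an LC3-quasigroup).
   Context: A quasigroup is a set $Q$ with a binary operation $\cdot$ (written as juxtaposition) such that for all $a,b\in Q$ each of the equations $ax=b$ and $ya=b$ has a unique solution in $Q$. *)

theory Defs
  imports Main
begin

definition quasigroup :: "'a set \<Rightarrow> ('a \<Rightarrow> 'a \<Rightarrow> 'a) \<Rightarrow> bool" where
  "quasigroup Q m \<longleftrightarrow>
     (\<forall>a\<in>Q. \<forall>b\<in>Q. m a b \<in> Q) \<and>
     (\<forall>a\<in>Q. \<forall>b\<in>Q. (\<exists>!x. x \<in> Q \<and> m a x = b) \<and> (\<exists>!y. y \<in> Q \<and> m y a = b))"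

end

theory Submission
  imports Defs
begin

theorem mainTheorem6:
  fixes Q :: "'a set" and m :: "'a \<Rightarrow> 'a \<Rightarrow> 'a"
  assumes "quasigroup Q m"
    and LC1: "\<forall>x\<in>Q. \<forall>y\<in>Q. \<forall>z\<in>Q. m (m x x) (m y z) = m (m x (m x y)) z"
  shows "\<forall>x\<in>Q. \<forall>y\<in>Q. \<forall>z\<in>Q. m x (m x (m y z)) = m (m (m x x) y) z"
proof (intro ballI)
  have cl: "\<And>a b. a \<in> Q \<Longrightarrow> b \<in> Q \<Longrightarrow> m a b \<in> Q"
    using assms(1) unfolding quasigroup_def by blast
  have lc: "\<And>a b c. a \<in> Q \<Longrightarrow> b \<in> Q \<Longrightarrow> c \<in> Q \<Longrightarrow> m a b = m a c \<Longrightarrow> b = c"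
  proof -
    fix a b c assume h: "a \<in> Q" "b \<in> Q" "c \<in> Q" "m a b = m a c"
    have "\<exists>!x. x \<in> Q \<and> m a x = m a b" using assms(1) h cl unfolding quasigroup_def by blast
    thus "b = c" using h by metis
  qed
  have rc: "\<And>a b c. a \<in> Q \<Longrightarrow> b \<in> Q \<Longrightarrow> c \<in> Q \<Longrightarrow> m b a = m c a \<Longrightarrow> b = c"
  proof -
    fix a b c assume h: "a \<in> Q" "b \<in> Q" "c \<in> Q" "m b a = m c a"
    have "\<exists>!x. x \<in> Q \<and> m x a = m b a" using assms(1) h cl unfolding quasigroup_def by blast
    thus "b = c" using h by metis
  qed
  have ex: "\<And>a. a \<in> Q \<Longrightarrow> \<exists>e\<in>Q. m a e = a"
    using assms(1) unfolding quasigroup_def by blast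
  have leftid: "\<And>a e w. a \<in> Q \<Longrightarrow> e \<in> Q \<Longrightarrow> m a e = a \<Longrightarrow> w \<in> Q \<Longrightarrow> m e w = w"
  proof -
    fix a e w assume h: "a \<in> Q" "e \<in> Q" "m a e = a" "w \<in> Q"
    have "m (m a a) (m e w) = m (m a (m a e)) w" using LC1 h by blast
    hence "m (m a a) (m e w) = m (m a a) w" using h by simp
    thus "m e w = w" using lc cl h by blast
  qed
  fix x y z assume xyz: "x \<in> Q" "y \<in> Q" "z \<in> Q"
  obtain e where e: "e \<in> Q" "m x e = x" using ex xyz by blast
  have rid: "\<And>w. w \<in> Q \<Longrightarrow> m w e = w"
  proof -
    fix w assume w: "w \<in> Q"
    obtain f where f: "f \<in> Q" "m w f = w" using ex w by blast
    have "m f e = e" using leftid[OF w f(1) f(2) e(1)] .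
    moreover have "m e e = e" using leftid[OF xyz(1) e(1) e(2) e(1)] .
    ultimately have "f = e" using rc e f by metis
    thus "m w e = w" using f by simp
  qed
  have sq: "\<And>w. w \<in> Q \<Longrightarrow> m (m x x) w = m x (m x w)"
  proof -
    fix w assume w: "w \<in> Q"
    have "m (m x x) (m w e) = m (m x (m x w)) e" using LC1 xyz w e by blast
    thus "m (m x x) w = m x (m x w)" using rid w cl xyz by simp
  qed
  have "m (m x x) (m y z) = m (m x (m x y)) z" using LC1 xyz by blast
  thus "m x (m x (m y z)) = m (m (m x x) y) z" using sq[of "m y z"] sq[of y] cl xyz by simp
qed

end
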